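(* Let $\bm{f}:\mathbb{R}^n\to\mathbb{R}^n$ be twice differentiable, let $\hat{\bm{y}}^n\in\mathbb{R}^n$, $s\ge1$ an integer, $\varepsilon\ge0$, and $\epsilon>0$ a constant. For $\Delta t>0$ consider the mixed-precision RKC step $$\hat{\bm{d}}_0=\bm{0},\quad \hat{\bm{d}}_1=\mu_1\Delta t\bm{f}(\hat{\bm{y}}^n),\quad \hat{\bm{d}}_j=\nu_j\hat{\bm{d}}_{j-1}+\kappa_j\hat{\bm{d}}_{j-2}+\mu_j\Delta t\big(\bm{f}(\hat{\bm{y}}^n)+\hat\Delta\bm{f}_{j-1}\big)+\gamma_j\Delta t\bm{f}(\hat{\bm{y}}^n),\ j=2,\dots,s,\quad \hat{\bm{y}}^{n+1}=\hat{\bm{y}}^n+\hat{\bm{d}}_s,$$ where $\hat\Delta\bm{f}_1,\dots,\hat\Delta\bm{f}_{s-1}\in\mathbb{R}^n$ are given vectors (which may depend on $\Delta t$ and on previous stages), and $\Delta\bm{f}_j:=\bm{f}(\hat{\bm{y}}^n+\hat{\bm{d}}_j)-\bm{f}(\hat{\bm{y}}^n)$. (a) If the coefficients are the order-$p$ RKC coefficients with $p=1$ or $p=2$ (with $s\ge2$ if $p=2$), and $\hat\Delta\bm{f}_j=\Delta\bm{f}_j+O(\epsilon\Delta t)$ as $\Delta t\to0$ for all $j$, then $$\hat{\bm{y}}^{n+1}=\hat{\bm{y}}^n+\Delta t\bm{f}(\hat{\bm{y}}^n)+O(\epsilon\Delta t^2+\Delta t^2)\quad\text{as }\Delta t\to0.$$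 (b) If the coefficients are the RKC coefficients with $p=2$ ($s\ge2$) and $\hat\Delta\bm{f}_j=\Delta\bm{f}_j+O(\Delta t^2)$ as $\Delta t\to0$ for all $j$, then $$\hat{\bm{y}}^{n+1}=\hat{\bm{y}}^n+\Delta t\bm{f}(\hat{\bm{y}}^n)+\tfrac12\Delta t^2\bm{f}'(\hat{\bm{y}}^n)\bm{f}(\hat{\bm{y}}^n)+O(\Delta t^3)\quad\text{as }\Delta t\to0.$$
   Context: All $O(\cdot)$ are as $\Delta t\to0$ with $\bm{f}$, $\hat{\bm{y}}^n$, $s$, $\varepsilon$, $\epsilon$ fixed. Chebyshev polynomials $T_0=1$, $T_1=x$, $T_j=2xT_{j-1}-T_{j-2}$. Order-$p$ RKC coefficients with $s$ stages and damping $\varepsilon$: $\omega_0=1+\varepsilon/s^2$. If $p=1$: $\omega_1=T_s(\omega_0)/T_s'(\omega_0)$, $b_j=1/T_j(\omega_0)$, $j=0,\dots,s$. If $p=2$: $\omega_1=T_s'(\omega_0)/T_s''(\omega_0)$, $b_j=T_j''(\omega_0)/T_j'(\omega_0)^2$ for $j=2,\dots,s$, $b_0=b_1=b_2$. Then $a_j=1-b_jT_j(\omega_0)$; $\mu_1=b_1\omega_1$; for $j=2,\dots,s$: $\mu_j=2\omega_1b_j/b_{j-1}$, $\nu_j=2\omega_0b_j/b_{j-1}$, $\kappa_j=-b_j/b_{j-2}$, $\gamma_j=-\mu_ja_{j-1}$. *)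

theory Defs
  imports "HOL-Analysis.Analysis" "HOL-Library.Landau_Symbols"
begin

fun cheb :: "nat \<Rightarrow> real \<Rightarrow> real" where
  "cheb 0 x = 1"
| "cheb (Suc 0) x = x"
| "cheb (Suc (Suc j)) x = 2 * x * cheb (Suc j) x - cheb j x"

definition cheb1 :: "nat \<Rightarrow> real \<Rightarrow> real" where
  "cheb1 j x = deriv (cheb j) x"

definition cheb2 :: "nat \<Rightarrow> real \<Rightarrow> real" where
  "cheb2 j x = deriv (deriv (cheb j)) x"

text \<open>RKC coefficients of order p with s stages and damping parameter dmp (the paper's varepsilon).\<close>
definition rkc_w0 :: "nat \<Rightarrow> real \<Rightarrow> real" where
  "rkc_w0 s dmp = 1 + dmp / (real s)^2"

definition rkc_w1 :: "nat \<Rightarrow> nat \<Rightarrow> real \<Rightarrow> real" where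
  "rkc_w1 p s dmp =
     (if p = 1 then cheb s (rkc_w0 s dmp) / cheb1 s (rkc_w0 s dmp)
      else cheb1 s (rkc_w0 s dmp) / cheb2 s (rkc_w0 s dmp))"

definition rkc_b :: "nat \<Rightarrow> nat \<Rightarrow> real \<Rightarrow> nat \<Rightarrow> real" where
  "rkc_b p s dmp j =
     (if p = 1 then 1 / cheb j (rkc_w0 s dmp)
      else (let k = max j 2 in cheb2 k (rkc_w0 s dmp) / (cheb1 k (rkc_w0 s dmp))^2))"

definition rkc_a :: "nat \<Rightarrow> nat \<Rightarrow> real \<Rightarrow> nat \<Rightarrow> real" where
  "rkc_a p s dmp j = 1 - rkc_b p s dmp j * cheb j (rkc_w0 s dmp)"

definition rkc_mu :: "nat \<Rightarrow> nat \<Rightarrow> real \<Rightarrow> nat \<Rightarrow> real" where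
  "rkc_mu p s dmp j =
     (if j = 1 then rkc_b p s dmp 1 * rkc_w1 p s dmp
      else 2 * rkc_w1 p s dmp * rkc_b p s dmp j / rkc_b p s dmp (j - 1))"

definition rkc_nu :: "nat \<Rightarrow> nat \<Rightarrow> real \<Rightarrow> nat \<Rightarrow> real" where
  "rkc_nu p s dmp j = 2 * rkc_w0 s dmp * rkc_b p s dmp j / rkc_b p s dmp (j - 1)"

definition rkc_kappa :: "nat \<Rightarrow> nat \<Rightarrow> real \<Rightarrow> nat \<Rightarrow> real" where
  "rkc_kappa p s dmp j = - rkc_b p s dmp j / rkc_b p s dmp (j - 2)"

definition rkc_gamma :: "nat \<Rightarrow> nat \<Rightarrow> real \<Rightarrow> nat \<Rightarrow> real" where
  "rkc_gamma p s dmp j = - rkc_mu p s dmp j * rkc_a p s dmp (j - 1)"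

text \<open>Stages of the mixed-precision RKC step with step size h (= Delta t).
  fhat h j is the perturbed increment hat-Delta-f_j (j = 1..s-1) used in stage j+1.
  rkc_d p s dmp f y fhat h j = hat-d_j.\<close>
fun rkc_d :: "nat \<Rightarrow> nat \<Rightarrow> real \<Rightarrow> ('a::real_vector \<Rightarrow> 'a) \<Rightarrow> 'a
              \<Rightarrow> (real \<Rightarrow> nat \<Rightarrow> 'a) \<Rightarrow> real \<Rightarrow> nat \<Rightarrow> 'a" where
  "rkc_d p s dmp f y fhat h 0 = 0"
| "rkc_d p s dmp f y fhat h (Suc 0) = (rkc_mu p s dmp 1 * h) *\<^sub>R f y"
| "rkc_d p s dmp f y fhat h (Suc (Suc j)) =
     rkc_nu p s dmp (j + 2) *\<^sub>R rkc_d p s dmp f y fhat h (Suc j)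
   + rkc_kappa p s dmp (j + 2) *\<^sub>R rkc_d p s dmp f y fhat h j
   + (rkc_mu p s dmp (j + 2) * h) *\<^sub>R (f y + fhat h (Suc j))
   + (rkc_gamma p s dmp (j + 2) * h) *\<^sub>R f y"

end

theory Submission
  imports Defs
begin

fun dcheb :: "nat \<Rightarrow> real \<Rightarrow> real" where
  "dcheb 0 x = 0"
| "dcheb (Suc 0) x = 1"
| "dcheb (Suc (Suc j)) x = 2 * cheb (Suc j) x + 2 * x * dcheb (Suc j) x - dcheb j x"

fun ddcheb :: "nat \<Rightarrow> real \<Rightarrow> real" where
  "ddcheb 0 x = 0"
| "ddcheb (Suc 0) x = 0"
| "ddcheb (Suc (Suc j)) x = 4 * dcheb (Suc j) x + 2 * x * ddcheb (Suc j) x - ddcheb j x"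

lemma cheb_has_deriv: "(cheb j has_real_derivative dcheb j x) (at x)"
proof (induction j arbitrary: x rule: nat_less_induct)
  case (1 n)
  show ?case
  proof (cases n)
    case 0 then show ?thesis by (simp add: has_real_derivative_iff_has_vector_derivative[symmetric])
  next
    case (Suc m)
    show ?thesis
    proof (cases m)
      case 0 then show ?thesis using Suc by (auto intro!: derivative_eq_intros)
    next
      case (Suc k)
      have e: "cheb n = (\<lambda>x. 2 * x * cheb (Suc k) x - cheb k x)"
        using \<open>n = Suc m\<close> Suc by (auto intro!: ext)
      have i1: "\<And>x. (cheb (Suc k) has_real_derivative dcheb (Suc k) x) (at x)"
        using 1 \<open>n = Suc m\<close> Suc by auto
      have i2: "\<And>x. (cheb k has_real_derivative dcheb k x) (at x)"
        using 1 \<open>n = Suc m\<close> Suc by auto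
      show ?thesis unfolding e using \<open>n = Suc m\<close> Suc
        by (auto intro!: derivative_eq_intros i1 i2 simp: algebra_simps)
    qed
  qed
qed

lemma dcheb_has_deriv: "(dcheb j has_real_derivative ddcheb j x) (at x)"
proof (induction j arbitrary: x rule: nat_less_induct)
  case (1 n)
  show ?case
  proof (cases n)
    case 0 then show ?thesis by (auto intro!: derivative_eq_intros)
  next
    case (Suc m)
    show ?thesis
    proof (cases m)
      case 0 then show ?thesis using Suc by (auto intro!: derivative_eq_intros)
    next
      case (Suc k)
      have e: "dcheb n = (\<lambda>x. 2 * cheb (Suc k) x + 2 * x * dcheb (Suc k) x - dcheb k x)"
        using \<open>n = Suc m\<close> Suc by (auto intro!: ext)
      have i1: "\<And>x. (dcheb (Suc k) has_real_derivative ddcheb (Suc k) x) (at x)"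
        using 1 \<open>n = Suc m\<close> Suc by auto
      have i2: "\<And>x. (dcheb k has_real_derivative ddcheb k x) (at x)"
        using 1 \<open>n = Suc m\<close> Suc by auto
      show ?thesis unfolding e using \<open>n = Suc m\<close> Suc
        by (auto intro!: derivative_eq_intros i1 i2 cheb_has_deriv simp: algebra_simps)
    qed
  qed
qed

lemma cheb1_eq: "cheb1 j x = dcheb j x"
proof -
  have "deriv (cheb j) = dcheb j"
    using cheb_has_deriv DERIV_imp_deriv by blast
  then show ?thesis by (simp add: cheb1_def)
qed

lemma cheb2_eq: "cheb2 j x = ddcheb j x"
proof -
  have "deriv (cheb j) = dcheb j"
    using cheb_has_deriv DERIV_imp_deriv by blast
  moreover have "deriv (dcheb j) = ddcheb j"
    using dcheb_has_deriv DERIV_imp_deriv by blast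
  ultimately show ?thesis by (simp add: cheb2_def)
qed

lemma cheb_mono: "x \<ge> 1 \<Longrightarrow> 1 \<le> cheb j x \<and> cheb j x \<le> cheb (Suc j) x"
proof (induction j)
  case 0 then show ?case by simp
next
  case (Suc j)
  have "2 * cheb (Suc j) x \<le> 2 * x * cheb (Suc j) x"
    using Suc by (simp add: mult_right_mono)
  then show ?case using Suc by (simp; linarith?)
qed

lemma dcheb_mono: "x \<ge> 1 \<Longrightarrow> 0 \<le> dcheb j x \<and> dcheb j x + 1 \<le> dcheb (Suc j) x"
proof (induction j)
  case 0 then show ?case by simp
next
  case (Suc j)
  have "2 * dcheb (Suc j) x \<le> 2 * x * dcheb (Suc j) x"
    using Suc by (simp add: mult_right_mono)
  then show ?case using Suc cheb_mono[OF Suc.prems, of "Suc j"] by (simp; linarith?)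
qed

lemma dcheb_pos: "x \<ge> 1 \<Longrightarrow> j \<ge> 1 \<Longrightarrow> dcheb j x \<ge> 1"
  using dcheb_mono[of x "j - 1"] by (cases j) auto

lemma ddcheb_mono: "x \<ge> 1 \<Longrightarrow> 0 \<le> ddcheb j x \<and> ddcheb j x \<le> ddcheb (Suc j) x"
proof (induction j)
  case 0 then show ?case by simp
next
  case (Suc j)
  have "2 * ddcheb (Suc j) x \<le> 2 * x * ddcheb (Suc j) x"
    using Suc by (simp add: mult_right_mono)
  then show ?case using Suc dcheb_mono[OF Suc.prems, of "Suc j"] by (simp; linarith?)
qed

lemma ddcheb_pos: "x \<ge> 1 \<Longrightarrow> j \<ge> 2 \<Longrightarrow> ddcheb j x \<ge> 4"
proof -
  assume x: "x \<ge> 1" and j: "j \<ge> 2"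
  then obtain k where k: "j = Suc (Suc k)" by (metis add_2_eq_Suc le_Suc_ex)
  have "2 * ddcheb (Suc k) x \<le> 2 * x * ddcheb (Suc k) x"
    using ddcheb_mono[OF x, of "Suc k"] x by (simp add: mult_right_mono)
  then show ?thesis using k ddcheb_mono[OF x, of k] dcheb_pos[OF x, of "Suc k"] by (simp; linarith?)
qed


lemma w0_ge: "dmp \<ge> 0 \<Longrightarrow> rkc_w0 s dmp \<ge> 1"
  by (simp add: rkc_w0_def)

lemma b_nz: "dmp \<ge> 0 \<Longrightarrow> rkc_b p s dmp j \<noteq> 0"
proof -
  assume d: "dmp \<ge> 0"
  note w = w0_ge[OF d, of s]
  show ?thesis
  proof (cases "p = 1")
    case True then show ?thesis using cheb_mono[OF w, of j] by (simp add: rkc_b_def)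
  next
    case False
    have "ddcheb (max j 2) (rkc_w0 s dmp) \<ge> 4" by (rule ddcheb_pos[OF w]) simp
    moreover have "dcheb (max j 2) (rkc_w0 s dmp) \<ge> 1" by (rule dcheb_pos[OF w]) simp
    ultimately show ?thesis using False by (simp add: rkc_b_def cheb1_eq cheb2_eq Let_def)
  qed
qed

definition cc :: "nat \<Rightarrow> nat \<Rightarrow> real \<Rightarrow> nat \<Rightarrow> real" where
  "cc p s dmp j = rkc_b p s dmp j * rkc_w1 p s dmp * dcheb j (rkc_w0 s dmp)"

definition qq :: "nat \<Rightarrow> nat \<Rightarrow> real \<Rightarrow> nat \<Rightarrow> real" where
  "qq p s dmp j = rkc_b p s dmp j * (rkc_w1 p s dmp)^2 * ddcheb j (rkc_w0 s dmp) / 2"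

lemma cc0: "cc p s dmp 0 = 0" by (simp add: cc_def)
lemma qq0: "qq p s dmp 0 = 0" by (simp add: qq_def)
lemma qq1: "qq p s dmp 1 = 0" by (simp add: qq_def)
lemma cc1: "rkc_mu p s dmp 1 = cc p s dmp 1" by (simp add: cc_def rkc_mu_def)

lemma cc_rec:
  assumes "dmp \<ge> 0"
  shows "rkc_nu p s dmp (j+2) * cc p s dmp (j+1) + rkc_kappa p s dmp (j+2) * cc p s dmp j
         + rkc_mu p s dmp (j+2) + rkc_gamma p s dmp (j+2) = cc p s dmp (j+2)"
proof -
  have n1: "rkc_b p s dmp (j+1) \<noteq> 0" and n0: "rkc_b p s dmp j \<noteq> 0"
    using b_nz[OF assms] by auto
  show ?thesis using n1 n0
    by (simp add: cc_def rkc_nu_def rkc_kappa_def rkc_mu_def rkc_gamma_def rkc_a_def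
        numeral_2_eq_2 field_simps)
qed

lemma qq_rec:
  assumes "dmp \<ge> 0"
  shows "rkc_nu p s dmp (j+2) * qq p s dmp (j+1) + rkc_kappa p s dmp (j+2) * qq p s dmp j
         + rkc_mu p s dmp (j+2) * cc p s dmp (j+1) = qq p s dmp (j+2)"
proof -
  have n1: "rkc_b p s dmp (j+1) \<noteq> 0" and n0: "rkc_b p s dmp j \<noteq> 0"
    using b_nz[OF assms] by auto
  show ?thesis using n1 n0
    by (simp add: cc_def qq_def rkc_nu_def rkc_kappa_def rkc_mu_def
        numeral_2_eq_2 field_simps power2_eq_square)
qed

lemma cc_s:
  assumes "dmp \<ge> 0" "s \<ge> 1" "p = 1 \<or> (p = 2 \<and> s \<ge> 2)"
  shows "cc p s dmp s = 1"
proof -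
  note w = w0_ge[OF assms(1), of s]
  have t: "cheb s (rkc_w0 s dmp) \<ge> 1" using cheb_mono[OF w] by blast
  have d: "dcheb s (rkc_w0 s dmp) \<ge> 1" using dcheb_pos[OF w assms(2)] .
  show ?thesis
  proof (cases "p = 1")
    case True then show ?thesis using t d by (simp add: cc_def rkc_b_def rkc_w1_def cheb1_eq)
  next
    case False
    then have s2: "s \<ge> 2" "p = 2" using assms(3) by auto
    have dd: "ddcheb s (rkc_w0 s dmp) \<ge> 4" using ddcheb_pos[OF w s2(1)] .
    show ?thesis using False s2 d dd
      by (simp add: cc_def rkc_b_def rkc_w1_def cheb1_eq cheb2_eq Let_def max_def power2_eq_square)
  qed
qed

lemma qq_s:
  assumes "dmp \<ge> 0" "s \<ge> 2"
  shows "qq 2 s dmp s = 1/2"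
proof -
  note w = w0_ge[OF assms(1), of s]
  have d: "dcheb s (rkc_w0 s dmp) \<ge> 1" using dcheb_pos[OF w] assms(2) by simp
  have dd: "ddcheb s (rkc_w0 s dmp) \<ge> 4" using ddcheb_pos[OF w assms(2)] .
  show ?thesis using assms d dd
    by (simp add: qq_def rkc_b_def rkc_w1_def cheb1_eq cheb2_eq Let_def max_def power2_eq_square)
qed


definition evb :: "(real \<Rightarrow> 'a::real_normed_vector) \<Rightarrow> nat \<Rightarrow> bool" where
  "evb u k \<longleftrightarrow> (\<exists>C. eventually (\<lambda>h. norm (u h) \<le> C * h^k) (at_right 0))"

lemma ev_pos: "eventually (\<lambda>h::real. 0 < h) (at_right 0)"
  by (rule eventually_at_right_less)

lemma ev_lt1: "eventually (\<lambda>h::real. h < 1) (at_right 0)"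
  by (simp add: eventually_at_right_field) (rule exI[of _ 1], auto)

lemma evb_add: "evb u k \<Longrightarrow> evb v k \<Longrightarrow> evb (\<lambda>h. u h + v h) k"
  unfolding evb_def
proof (elim exE)
  fix C1 C2 assume 1: "eventually (\<lambda>h. norm (u h) \<le> C1 * h^k) (at_right 0)"
    and 2: "eventually (\<lambda>h. norm (v h) \<le> C2 * h^k) (at_right 0)"
  have "eventually (\<lambda>h. norm (u h + v h) \<le> (C1 + C2) * h^k) (at_right 0)"
    using 1 2 by eventually_elim (smt (verit) distrib_right norm_triangle_ineq)
  then show "\<exists>C. eventually (\<lambda>h. norm (u h + v h) \<le> C * h^k) (at_right 0)" by blast
qed

lemma evb_scale: "evb u k \<Longrightarrow> evb (\<lambda>h. c *\<^sub>R u h) k"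
  unfolding evb_def
proof (elim exE)
  fix C assume 1: "eventually (\<lambda>h. norm (u h) \<le> C * h^k) (at_right 0)"
  have "eventually (\<lambda>h. norm (c *\<^sub>R u h) \<le> (\<bar>c\<bar> * C) * h^k) (at_right 0)"
    using 1 by eventually_elim (simp add: mult.assoc mult_left_mono)
  then show "\<exists>C. eventually (\<lambda>h. norm (c *\<^sub>R u h) \<le> C * h^k) (at_right 0)" by blast
qed

lemma evb_diff: "evb u k \<Longrightarrow> evb v k \<Longrightarrow> evb (\<lambda>h. u h - v h) k"
  using evb_add[of u k "\<lambda>h. (-1) *\<^sub>R v h"] evb_scale[of v k "-1"] by simp

lemma evb_zero: "evb (\<lambda>h. 0) k"
  unfolding evb_def by (rule exI[of _ 0]) simp

lemma evb_mono: "evb u k \<Longrightarrow> m \<le> k \<Longrightarrow> evb u m"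
  unfolding evb_def
proof (elim exE)
  fix C assume 1: "eventually (\<lambda>h. norm (u h) \<le> C * h^k) (at_right 0)" and mk: "m \<le> k"
  have "eventually (\<lambda>h. norm (u h) \<le> \<bar>C\<bar> * h^m) (at_right 0)"
    using 1 ev_pos ev_lt1
  proof eventually_elim
    case (elim h)
    have "h^k \<le> h^m" using elim mk by (simp add: power_decreasing)
    then have "C * h^k \<le> \<bar>C\<bar> * h^m"
      by (smt (verit, best) abs_ge_self elim(2) mult_left_mono mult_right_mono zero_le_power)
    then show ?case using elim by linarith
  qed
  then show "\<exists>C. eventually (\<lambda>h. norm (u h) \<le> C * h^m) (at_right 0)" by blast
qed

lemma evb_hscale: "evb u k \<Longrightarrow> evb (\<lambda>h. (c * h) *\<^sub>R u h) (Suc k)"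
  unfolding evb_def
proof (elim exE)
  fix C assume 1: "eventually (\<lambda>h. norm (u h) \<le> C * h^k) (at_right 0)"
  have "eventually (\<lambda>h. norm ((c * h) *\<^sub>R u h) \<le> (\<bar>c\<bar> * C) * h^Suc k) (at_right 0)"
    using 1 ev_pos
  proof eventually_elim
    case (elim h)
    have "norm ((c * h) *\<^sub>R u h) = (\<bar>c\<bar> * h) * norm (u h)" using elim by (simp add: abs_mult)
    also have "\<dots> \<le> (\<bar>c\<bar> * h) * (C * h^k)" using elim by (simp add: mult_left_mono)
    finally show ?case by (simp add: algebra_simps)
  qed
  then show "\<exists>C. eventually (\<lambda>h. norm ((c * h) *\<^sub>R u h) \<le> C * h^Suc k) (at_right 0)" by blast
qed

lemma evb_pow: "evb (\<lambda>h. (c * h^k) *\<^sub>R v) k"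
  unfolding evb_def
proof -
  have "eventually (\<lambda>h. norm ((c * h^k) *\<^sub>R v) \<le> (\<bar>c\<bar> * norm v) * h^k) (at_right 0)"
    using ev_pos by eventually_elim (simp add: abs_mult)
  then show "\<exists>C. eventually (\<lambda>h. norm ((c * h^k) *\<^sub>R v) \<le> C * h^k) (at_right 0)" by blast
qed

lemma evb_lin: "evb u k \<Longrightarrow> evb (\<lambda>h. blinfun_apply L (u h)) k"
  unfolding evb_def
proof (elim exE)
  fix C assume 1: "eventually (\<lambda>h. norm (u h) \<le> C * h^k) (at_right 0)"
  have "eventually (\<lambda>h. norm (blinfun_apply L (u h)) \<le> (norm L * C) * h^k) (at_right 0)"
    using 1
  proof eventually_elim
    case (elim h)
    have "norm (blinfun_apply L (u h)) \<le> norm L * norm (u h)" by (rule norm_blinfun)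
    also have "\<dots> \<le> norm L * (C * h^k)" using elim by (simp add: mult_left_mono)
    finally show ?case by (simp add: algebra_simps)
  qed
  then show "\<exists>C. eventually (\<lambda>h. norm (blinfun_apply L (u h)) \<le> C * h^k) (at_right 0)" by blast
qed

lemma evb_small: "evb u (Suc k) \<Longrightarrow> \<delta> > 0 \<Longrightarrow> eventually (\<lambda>h. norm (u h) < \<delta>) (at_right 0)"
  unfolding evb_def
proof (elim exE)
  fix C assume 1: "eventually (\<lambda>h. norm (u h) \<le> C * h^Suc k) (at_right 0)" and d: "\<delta> > 0"
  have "((\<lambda>h::real. C * h^Suc k) \<longlongrightarrow> C * 0^Suc k) (at_right 0)"
    by (intro tendsto_intros tendsto_mono[OF at_le]) auto
  then have "eventually (\<lambda>h. C * h^Suc k < \<delta>) (at_right 0)"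
    using d by (intro order_tendstoD(2)) auto
  with 1 show "eventually (\<lambda>h. norm (u h) < \<delta>) (at_right 0)"
    by eventually_elim simp
qed

lemma evb_loc2:
  assumes g: "\<And>d. norm d < \<delta> \<Longrightarrow> norm (g d) \<le> K * (norm d)^2" and d: "\<delta> > 0" and K: "K \<ge> 0"
    and u: "evb u 1"
  shows "evb (\<lambda>h. g (u h)) 2"
proof -
  obtain C where 1: "eventually (\<lambda>h. norm (u h) \<le> C * h^1) (at_right 0)" using u evb_def by blast
  have s: "eventually (\<lambda>h. norm (u h) < \<delta>) (at_right 0)" using evb_small[of u 0] u d by simp
  have "eventually (\<lambda>h. norm (g (u h)) \<le> (K * C^2) * h^2) (at_right 0)"
    using 1 s ev_pos
  proof eventually_elim
    case (elim h)
    have "norm (g (u h)) \<le> K * (norm (u h))^2" using g elim by blast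
    also have "\<dots> \<le> K * (C * h)^2" using elim K by (intro mult_left_mono power_mono) auto
    finally show ?case by (simp add: power_mult_distrib)
  qed
  then show ?thesis unfolding evb_def by blast
qed

lemma evb_loc1:
  assumes g: "\<And>d. norm d < \<delta> \<Longrightarrow> norm (g d) \<le> K * norm d" and d: "\<delta> > 0" and K: "K \<ge> 0"
    and u: "evb u (Suc k)"
  shows "evb (\<lambda>h. g (u h)) (Suc k)"
proof -
  obtain C where 1: "eventually (\<lambda>h. norm (u h) \<le> C * h^Suc k) (at_right 0)" using u evb_def by blast
  have s: "eventually (\<lambda>h. norm (u h) < \<delta>) (at_right 0)" using evb_small u d by blast
  have "eventually (\<lambda>h. norm (g (u h)) \<le> (K * C) * h^Suc k) (at_right 0)"
    using 1 s
  proof eventually_elim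
    case (elim h)
    have "norm (g (u h)) \<le> K * norm (u h)" using g elim by blast
    also have "\<dots> \<le> K * (C * h^Suc k)" using elim K by (intro mult_left_mono) auto
    finally show ?case by (simp add: algebra_simps)
  qed
  then show ?thesis unfolding evb_def by blast
qed

lemma evb_bigo: "evb u k \<longleftrightarrow> (\<lambda>h. norm (u h)) \<in> O[at_right 0](\<lambda>h. h^k)"
proof
  assume "evb u k"
  then obtain C where 1: "eventually (\<lambda>h. norm (u h) \<le> C * h^k) (at_right 0)" using evb_def by blast
  have "eventually (\<lambda>h. norm (norm (u h)) \<le> C * norm (h^k)) (at_right 0)"
    using 1 ev_pos by eventually_elim (simp add: abs_of_pos)
  then show "(\<lambda>h. norm (u h)) \<in> O[at_right 0](\<lambda>h. h^k)" by (rule bigoI)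
next
  assume "(\<lambda>h. norm (u h)) \<in> O[at_right 0](\<lambda>h. h^k)"
  then obtain c where 1: "eventually (\<lambda>h. norm (norm (u h)) \<le> c * norm (h^k)) (at_right 0)"
    by (auto elim: landau_o.bigE)
  have "eventually (\<lambda>h. norm (u h) \<le> c * h^k) (at_right 0)"
    using 1 ev_pos by eventually_elim (simp add: abs_of_pos)
  then show "evb u k" unfolding evb_def by blast
qed

lemma taylor2:
  fixes f :: "'a::real_normed_vector \<Rightarrow> 'b::real_normed_vector"
  assumes fd: "\<And>x. (f has_derivative blinfun_apply (Df x)) (at x)"
    and Dd: "Df differentiable (at y)"
  shows "\<exists>\<delta>>0. \<exists>K\<ge>0. \<forall>d. norm d < \<delta> \<longrightarrow> norm (f (y + d) - f y - Df y d) \<le> K * (norm d)^2"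
proof -
  obtain D' where D': "(Df has_derivative D') (at y)" using Dd differentiable_def by blast
  then have bl: "bounded_linear D'"
    and e: "\<forall>e>0. \<exists>d>0. \<forall>x. norm (x - y) < d \<longrightarrow> norm (Df x - Df y - D' (x - y)) \<le> e * norm (x - y)"
    using has_derivative_at_alt by blast+
  obtain \<delta> where dpos: "\<delta> > 0"
    and dd: "\<forall>x. norm (x - y) < \<delta> \<longrightarrow> norm (Df x - Df y - D' (x - y)) \<le> 1 * norm (x - y)"
    using e by (meson zero_less_one)
  obtain B where B: "\<And>v. norm (D' v) \<le> norm v * B" "B \<ge> 0"
    using bounded_linear.nonneg_bounded[OF bl] by blast
  define L where "L = B + 1"
  have L0: "L \<ge> 0" using B L_def by simp
  have lip: "norm (Df x - Df y) \<le> L * norm (x - y)" if "norm (x - y) < \<delta>" for x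
  proof -
    have "norm (Df x - Df y) \<le> norm (Df x - Df y - D' (x - y)) + norm (D' (x - y))"
      by (metis diff_add_cancel norm_triangle_ineq)
    also have "\<dots> \<le> norm (x - y) + norm (x - y) * B" using dd that B(1)[of "x - y"] by force
    finally show ?thesis by (simp add: L_def algebra_simps)
  qed
  have main: "norm (f (y + d) - f y - Df y d) \<le> L * (norm d)^2" if nd: "norm d < \<delta>" for d
  proof -
    let ?S = "cball y (norm d)"
    have "norm (f (y + d) - f y - blinfun_apply (Df y) ((y + d) - y)) \<le> norm ((y + d) - y) * (L * norm d)"
    proof (rule differentiable_bound_linearization[where S = ?S and f' = "\<lambda>x. blinfun_apply (Df x)"])
      fix t :: real assume "t \<in> {0..1}"
      then show "y + t *\<^sub>R (y + d - y) \<in> ?S"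
        by (auto simp: dist_norm mult_left_le_one_le)
    next
      fix x assume "x \<in> ?S"
      then show "(f has_derivative blinfun_apply (Df x)) (at x within ?S)"
        using fd has_derivative_at_withinI by blast
    next
      fix x assume xs: "x \<in> ?S"
      then have "norm (x - y) \<le> norm d" by (simp add: dist_norm norm_minus_commute)
      then have "norm (x - y) < \<delta>" using nd by linarith
      then have "norm (Df x - Df y) \<le> L * norm (x - y)" by (rule lip)
      also have "\<dots> \<le> L * norm d" using \<open>norm (x - y) \<le> norm d\<close> L0 by (simp add: mult_left_mono)
      finally have "norm (Df x - Df y) \<le> L * norm d" .
      moreover have "onorm (blinfun_apply (Df x) - blinfun_apply (Df y)) = norm (Df x - Df y)"
        by (simp add: norm_blinfun.rep_eq minus_blinfun.rep_eq fun_diff_def)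
      ultimately show "onorm (blinfun_apply (Df x) - blinfun_apply (Df y)) \<le> L * norm d" by simp
    next
      show "y \<in> ?S" by simp
    qed
    then show ?thesis by (simp add: power2_eq_square algebra_simps)
  qed
  show ?thesis using dpos L0 main by blast
qed


lemma evb_lin1: "evb (\<lambda>h. (h * c) *\<^sub>R v) 1"
  using evb_pow[of c 1 v] by (simp add: mult.commute)

lemma evb_quad: "evb (\<lambda>h. (h^2 * c) *\<^sub>R v) 2"
  using evb_pow[of c 2 v] by (simp add: mult.commute)

lemma lip_from_taylor:
  fixes f :: "'a::real_normed_vector \<Rightarrow> 'b::real_normed_vector" and Df :: "'a \<Rightarrow> 'a \<Rightarrow>\<^sub>L 'b"
  assumes "\<forall>d. norm d < \<delta> \<longrightarrow> norm (f (y + d) - f y - Df y d) \<le> K * (norm d)^2" "K \<ge> 0"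
  shows "norm d < \<delta> \<Longrightarrow> norm (f (y + d) - f y) \<le> (norm (Df y) + K * \<delta>) * norm d"
proof -
  assume nd: "norm d < \<delta>"
  have "norm (f (y + d) - f y) \<le> norm (f (y + d) - f y - Df y d) + norm (blinfun_apply (Df y) d)"
    by (metis diff_add_cancel norm_triangle_ineq)
  also have "\<dots> \<le> K * (norm d)^2 + norm (Df y) * norm d"
    using assms nd norm_blinfun[of "Df y" d] by force
  also have "K * (norm d)^2 \<le> K * \<delta> * norm d"
    using nd assms(2) by (simp add: power2_eq_square mult_left_mono mult_right_mono mult.assoc)
  finally show ?thesis by (simp add: algebra_simps)
qed

lemma partA:
  fixes f :: "'a::real_normed_vector \<Rightarrow> 'a"
  assumes fd: "\<And>x. (f has_derivative blinfun_apply (Df x)) (at x)"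
    and Dd: "Df differentiable (at y)" and dmp: "dmp \<ge> 0"
    and hyp: "\<forall>j\<in>{1..s-1}. evb (\<lambda>h. fhat h j - (f (y + rkc_d p s dmp f y fhat h j) - f y)) 1"
  shows "j \<le> s \<Longrightarrow> evb (\<lambda>h. rkc_d p s dmp f y fhat h j - (h * cc p s dmp j) *\<^sub>R f y) 2"
proof (induction j rule: nat_less_induct)
  case (1 n)
  obtain \<delta> K where dK: "\<delta> > 0" "K \<ge> 0"
    "\<forall>d. norm d < \<delta> \<longrightarrow> norm (f (y + d) - f y - Df y d) \<le> K * (norm d)^2"
    using taylor2[OF fd Dd] by blast
  show ?case
  proof (cases n)
    case 0 then show ?thesis by (simp add: cc0 evb_zero)
  next
    case (Suc m)
    show ?thesis
    proof (cases m)
      case 0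
      have "rkc_mu p s dmp (Suc 0) = cc p s dmp (Suc 0)" using cc1 by simp
      then show ?thesis using Suc 0 by (simp add: mult.commute evb_zero)
    next
      case (Suc k)
      note nk = \<open>n = Suc m\<close>[unfolded Suc]
      let ?d = "rkc_d p s dmp f y fhat"
      have E1: "evb (\<lambda>h. ?d h (Suc k) - (h * cc p s dmp (Suc k)) *\<^sub>R f y) 2"
        using 1 nk by auto
      have E0: "evb (\<lambda>h. ?d h k - (h * cc p s dmp k) *\<^sub>R f y) 2"
        using 1 nk by auto
      have D1: "evb (\<lambda>h. ?d h (Suc k)) 1"
        using evb_add[OF evb_mono[OF E1] evb_lin1[of "cc p s dmp (Suc k)" "f y"]] by simp
      have lip: "\<And>d. norm d < \<delta> \<Longrightarrow> norm (f (y + d) - f y) \<le> (norm (Df y) + K * \<delta>) * norm d"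
        using lip_from_taylor[of \<delta> f y Df K] dK by blast
      have Df1: "evb (\<lambda>h. f (y + ?d h (Suc k)) - f y) 1"
        using evb_loc1[where g = "\<lambda>d. f (y + d) - f y" and k = 0, OF lip dK(1) _ D1[simplified]]
          dK by simp
      have H: "evb (\<lambda>h. fhat h (Suc k) - (f (y + ?d h (Suc k)) - f y)) 1"
        using hyp nk 1(2) by auto
      have FH: "evb (\<lambda>h. fhat h (Suc k)) 1"
        using evb_add[OF H Df1] by simp
      have eq: "?d h (Suc (Suc k)) - (h * cc p s dmp (Suc (Suc k))) *\<^sub>R f y =
          rkc_nu p s dmp (k+2) *\<^sub>R (?d h (Suc k) - (h * cc p s dmp (Suc k)) *\<^sub>R f y)
        + rkc_kappa p s dmp (k+2) *\<^sub>R (?d h k - (h * cc p s dmp k) *\<^sub>R f y)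
        + (rkc_mu p s dmp (k+2) * h) *\<^sub>R fhat h (Suc k)" for h
      proof -
        have c: "cc p s dmp (Suc (Suc k)) = rkc_nu p s dmp (k+2) * cc p s dmp (k+1) + rkc_kappa p s dmp (k+2) * cc p s dmp k
         + rkc_mu p s dmp (k+2) + rkc_gamma p s dmp (k+2)"
          using cc_rec[OF dmp, of p s k] by simp
        show ?thesis unfolding c by (simp add: algebra_simps)
      qed
      have "evb (\<lambda>h. rkc_nu p s dmp (k+2) *\<^sub>R (?d h (Suc k) - (h * cc p s dmp (Suc k)) *\<^sub>R f y)
        + rkc_kappa p s dmp (k+2) *\<^sub>R (?d h k - (h * cc p s dmp k) *\<^sub>R f y)
        + (rkc_mu p s dmp (k+2) * h) *\<^sub>R fhat h (Suc k)) 2"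
        using evb_hscale[OF FH, of "rkc_mu p s dmp (k+2)"]
        by (intro evb_add evb_scale E1 E0) (simp_all add: numeral_2_eq_2)
      then show ?thesis unfolding nk eq[symmetric] .
    qed
  qed
qed


lemma partB:
  fixes f :: "'a::real_normed_vector \<Rightarrow> 'a"
  assumes fd: "\<And>x. (f has_derivative blinfun_apply (Df x)) (at x)"
    and Dd: "Df differentiable (at y)" and dmp: "dmp \<ge> 0"
    and hyp: "\<forall>j\<in>{1..s-1}. evb (\<lambda>h. fhat h j - (f (y + rkc_d p s dmp f y fhat h j) - f y)) 2"
  shows "j \<le> s \<Longrightarrow> evb (\<lambda>h. rkc_d p s dmp f y fhat h j - (h * cc p s dmp j) *\<^sub>R f y
                          - (h^2 * qq p s dmp j) *\<^sub>R Df y (f y)) 3"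
proof (induction j rule: nat_less_induct)
  case (1 n)
  obtain \<delta> K where dK: "\<delta> > 0" "K \<ge> 0"
    "\<forall>d. norm d < \<delta> \<longrightarrow> norm (f (y + d) - f y - Df y d) \<le> K * (norm d)^2"
    using taylor2[OF fd Dd] by blast
  let ?G = "blinfun_apply (Df y) (f y)"
  show ?case
  proof (cases n)
    case 0 then show ?thesis by (simp add: cc0 qq0 evb_zero)
  next
    case (Suc m)
    show ?thesis
    proof (cases m)
      case 0
      have "rkc_mu p s dmp (Suc 0) = cc p s dmp (Suc 0)" using cc1 by simp
      moreover have "qq p s dmp (Suc 0) = 0" using qq1 by simp
      ultimately show ?thesis using Suc 0 by (simp add: mult.commute evb_zero)
    next
      case (Suc k)
      note nk = \<open>n = Suc m\<close>[unfolded Suc]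
      let ?d = "rkc_d p s dmp f y fhat"
      let ?c = "cc p s dmp" and ?q = "qq p s dmp"
      have E1: "evb (\<lambda>h. ?d h (Suc k) - (h * ?c (Suc k)) *\<^sub>R f y - (h^2 * ?q (Suc k)) *\<^sub>R ?G) 3"
        using 1 nk by auto
      have E0: "evb (\<lambda>h. ?d h k - (h * ?c k) *\<^sub>R f y - (h^2 * ?q k) *\<^sub>R ?G) 3"
        using 1 nk by auto
      have D1a: "evb (\<lambda>h. ?d h (Suc k) - (h * ?c (Suc k)) *\<^sub>R f y) 2"
        using evb_add[OF evb_mono[OF E1] evb_quad[of "?q (Suc k)" ?G]] by simp
      have D1: "evb (\<lambda>h. ?d h (Suc k)) 1"
        using evb_add[OF evb_mono[OF D1a] evb_lin1[of "?c (Suc k)" "f y"]] by simp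
      have T: "\<And>d. norm d < \<delta> \<Longrightarrow> norm (f (y + d) - f y - Df y d) \<le> K * (norm d)^2"
        using dK by blast
      have R2: "evb (\<lambda>h. f (y + ?d h (Suc k)) - f y - Df y (?d h (Suc k))) 2"
        using evb_loc2[where g = "\<lambda>d. f (y + d) - f y - Df y d", OF T dK(1) dK(2) D1] by simp
      have H: "evb (\<lambda>h. fhat h (Suc k) - (f (y + ?d h (Suc k)) - f y)) 2"
        using hyp nk 1(2) by auto
      have L2: "evb (\<lambda>h. Df y (?d h (Suc k) - (h * ?c (Suc k)) *\<^sub>R f y)) 2"
        by (rule evb_lin[OF D1a])
      have rdef: "fhat h (Suc k) - (h * ?c (Suc k)) *\<^sub>R ?G =
          (fhat h (Suc k) - (f (y + ?d h (Suc k)) - f y))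
        + (f (y + ?d h (Suc k)) - f y - Df y (?d h (Suc k)))
        + Df y (?d h (Suc k) - (h * ?c (Suc k)) *\<^sub>R f y)" for h
        by (simp add: blinfun.diff_right blinfun.scaleR_right)
      have R: "evb (\<lambda>h. fhat h (Suc k) - (h * ?c (Suc k)) *\<^sub>R ?G) 2"
        unfolding rdef by (intro evb_add H R2 L2)
      have eq: "?d h (Suc (Suc k)) - (h * ?c (Suc (Suc k))) *\<^sub>R f y - (h^2 * ?q (Suc (Suc k))) *\<^sub>R ?G =
          rkc_nu p s dmp (k+2) *\<^sub>R (?d h (Suc k) - (h * ?c (Suc k)) *\<^sub>R f y - (h^2 * ?q (Suc k)) *\<^sub>R ?G)
        + rkc_kappa p s dmp (k+2) *\<^sub>R (?d h k - (h * ?c k) *\<^sub>R f y - (h^2 * ?q k) *\<^sub>R ?G)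
        + (rkc_mu p s dmp (k+2) * h) *\<^sub>R (fhat h (Suc k) - (h * ?c (Suc k)) *\<^sub>R ?G)" for h
      proof -
        have c: "?c (Suc (Suc k)) = rkc_nu p s dmp (k+2) * ?c (k+1) + rkc_kappa p s dmp (k+2) * ?c k
         + rkc_mu p s dmp (k+2) + rkc_gamma p s dmp (k+2)"
          using cc_rec[OF dmp, of p s k] by simp
        have q: "?q (Suc (Suc k)) = rkc_nu p s dmp (k+2) * ?q (k+1) + rkc_kappa p s dmp (k+2) * ?q k
         + rkc_mu p s dmp (k+2) * ?c (k+1)"
          using qq_rec[OF dmp, of p s k] by simp
        show ?thesis unfolding c q by (simp add: algebra_simps power2_eq_square)
      qed
      have M: "evb (\<lambda>h. (rkc_mu p s dmp (k+2) * h) *\<^sub>R (fhat h (Suc k) - (h * ?c (Suc k)) *\<^sub>R ?G)) 3"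
        using evb_hscale[OF R, of "rkc_mu p s dmp (k+2)"] by (simp add: numeral_3_eq_3 numeral_2_eq_2)
      have "evb (\<lambda>h. rkc_nu p s dmp (k+2) *\<^sub>R (?d h (Suc k) - (h * ?c (Suc k)) *\<^sub>R f y - (h^2 * ?q (Suc k)) *\<^sub>R ?G)
        + rkc_kappa p s dmp (k+2) *\<^sub>R (?d h k - (h * ?c k) *\<^sub>R f y - (h^2 * ?q k) *\<^sub>R ?G)
        + (rkc_mu p s dmp (k+2) * h) *\<^sub>R (fhat h (Suc k) - (h * ?c (Suc k)) *\<^sub>R ?G)) 3"
        by (intro evb_add evb_scale E1 E0 M)
      then show ?thesis unfolding nk eq[symmetric] .
    qed
  qed
qed


lemma bigo_eps_evb1:
  assumes "(\<lambda>h. norm (u h)) \<in> O[at_right 0](\<lambda>h. eps * h)" "eps \<noteq> 0"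
  shows "evb u 1"
proof -
  have "O[at_right 0](\<lambda>h::real. eps * h) = O[at_right 0](\<lambda>h. h^1)"
    using landau_o.big.cmult[OF assms(2), of "at_right 0" "\<lambda>h. h"] by simp
  then show ?thesis using assms(1) evb_bigo by metis
qed

lemma evb2_bigo_eps:
  assumes "evb u 2" "eps > (0::real)"
  shows "(\<lambda>h. norm (u h)) \<in> O[at_right 0](\<lambda>h. eps * h^2 + h^2)"
proof -
  have e: "(\<lambda>h::real. eps * h^2 + h^2) = (\<lambda>h. (eps + 1) * h^2)" by (auto simp: algebra_simps)
  have "O[at_right 0](\<lambda>h::real. (eps + 1) * h^2) = O[at_right 0](\<lambda>h. h^2)"
    using landau_o.big.cmult[of "eps + 1" "at_right 0" "\<lambda>h. h^2"] assms(2) by simp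
  then show ?thesis using assms(1) evb_bigo e by metis
qed

theorem theorem3p1:
  fixes f :: "real ^ 'n \<Rightarrow> real ^ 'n"
    and Df :: "real ^ 'n \<Rightarrow> ((real ^ 'n) \<Rightarrow>\<^sub>L (real ^ 'n))"
    and y :: "real ^ 'n"
    and s :: nat and dmp :: real and eps :: real
  assumes f_deriv: "\<And>x. (f has_derivative blinfun_apply (Df x)) (at x)"
    and Df_diff: "\<And>x. Df differentiable (at x)"
    and s_pos: "s \<ge> 1"
    and dmp_nonneg: "dmp \<ge> 0"
    and eps_pos: "eps > 0"
  shows
    "(\<forall>p fhat. (p = 1 \<or> (p = 2 \<and> s \<ge> 2)) \<and>
        (\<forall>j\<in>{1..s-1}.
           (\<lambda>h. norm (fhat h j - (f (y + rkc_d p s dmp f y fhat h j) - f y)))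
             \<in> O[at_right 0](\<lambda>h. eps * h))
      \<longrightarrow> (\<lambda>h. norm (y + rkc_d p s dmp f y fhat h s - (y + h *\<^sub>R f y)))
             \<in> O[at_right 0](\<lambda>h. eps * h^2 + h^2))
   \<and>
    (\<forall>fhat. s \<ge> 2 \<and>
        (\<forall>j\<in>{1..s-1}.
           (\<lambda>h. norm (fhat h j - (f (y + rkc_d 2 s dmp f y fhat h j) - f y)))
             \<in> O[at_right 0](\<lambda>h. h^2))
      \<longrightarrow> (\<lambda>h. norm (y + rkc_d 2 s dmp f y fhat h s
                       - (y + h *\<^sub>R f y + ((1/2) * h^2) *\<^sub>R (Df y (f y)))))
             \<in> O[at_right 0](\<lambda>h. h^3))"
proof (intro conjI allI impI)
  fix p :: nat and fhat
  assume a: "(p = 1 \<or> (p = 2 \<and> s \<ge> 2)) \<and>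
        (\<forall>j\<in>{1..s-1}.
           (\<lambda>h. norm (fhat h j - (f (y + rkc_d p s dmp f y fhat h j) - f y)))
             \<in> O[at_right 0](\<lambda>h. eps * h))"
  have hyp: "\<forall>j\<in>{1..s-1}. evb (\<lambda>h. fhat h j - (f (y + rkc_d p s dmp f y fhat h j) - f y)) 1"
  proof
    fix j assume "j \<in> {1..s-1}"
    then show "evb (\<lambda>h. fhat h j - (f (y + rkc_d p s dmp f y fhat h j) - f y)) 1"
      using a eps_pos by (intro bigo_eps_evb1[where eps = eps]) auto
  qed
  have "evb (\<lambda>h. rkc_d p s dmp f y fhat h s - (h * cc p s dmp s) *\<^sub>R f y) 2"
    using partA[OF f_deriv Df_diff dmp_nonneg hyp] by simp
  moreover have "cc p s dmp s = 1" using cc_s[OF dmp_nonneg s_pos] a by simp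
  moreover have "\<And>h. y + rkc_d p s dmp f y fhat h s - (y + h *\<^sub>R f y) = rkc_d p s dmp f y fhat h s - (h * 1) *\<^sub>R f y"
    by simp
  ultimately have "evb (\<lambda>h. y + rkc_d p s dmp f y fhat h s - (y + h *\<^sub>R f y)) 2"
    by simp
  then show "(\<lambda>h. norm (y + rkc_d p s dmp f y fhat h s - (y + h *\<^sub>R f y)))
             \<in> O[at_right 0](\<lambda>h. eps * h^2 + h^2)"
    using evb2_bigo_eps eps_pos by blast
next
  fix fhat
  assume a: "s \<ge> 2 \<and>
        (\<forall>j\<in>{1..s-1}.
           (\<lambda>h. norm (fhat h j - (f (y + rkc_d 2 s dmp f y fhat h j) - f y)))
             \<in> O[at_right 0](\<lambda>h. h^2))"
  have hyp: "\<forall>j\<in>{1..s-1}. evb (\<lambda>h. fhat h j - (f (y + rkc_d 2 s dmp f y fhat h j) - f y)) 2"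
    using a evb_bigo by blast
  have E: "evb (\<lambda>h. rkc_d 2 s dmp f y fhat h s - (h * cc 2 s dmp s) *\<^sub>R f y
                          - (h^2 * qq 2 s dmp s) *\<^sub>R Df y (f y)) 3"
    using partB[OF f_deriv Df_diff dmp_nonneg hyp] by simp
  have c1: "cc 2 s dmp s = 1" using cc_s[OF dmp_nonneg s_pos] a by simp
  have q1: "qq 2 s dmp s = 1/2" using qq_s[OF dmp_nonneg] a by simp
  have E2: "evb (\<lambda>h. rkc_d 2 s dmp f y fhat h s - (h * 1) *\<^sub>R f y
                          - (h^2 * (1/2)) *\<^sub>R Df y (f y)) 3"
    using E unfolding c1 q1 .
  have eqf: "(\<lambda>h. y + rkc_d 2 s dmp f y fhat h s
                       - (y + h *\<^sub>R f y + ((1/2) * h^2) *\<^sub>R (Df y (f y))))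
        = (\<lambda>h. rkc_d 2 s dmp f y fhat h s - (h * 1) *\<^sub>R f y - (h^2 * (1/2)) *\<^sub>R Df y (f y))"
    by (rule ext) (simp add: algebra_simps)
  have "evb (\<lambda>h. y + rkc_d 2 s dmp f y fhat h s
                       - (y + h *\<^sub>R f y + ((1/2) * h^2) *\<^sub>R (Df y (f y)))) 3"
    unfolding eqf by (rule E2)
  then show "(\<lambda>h. norm (y + rkc_d 2 s dmp f y fhat h s
                       - (y + h *\<^sub>R f y + ((1/2) * h^2) *\<^sub>R (Df y (f y)))))
             \<in> O[at_right 0](\<lambda>h. h^3)"
    by (rule evb_bigo[THEN iffD1])
qed

end
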